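(* Let $G$ be a connected non-bipartite graph and $\phi$ a sub-additive admissible matching policy. Then every word $u\in\mathbb W_2$ admits an erasing word for $(G,\phi)$, i.e. there is $z\in\mathcal V^*$ of even length such that for all $\varsigma'\in\mathcal S^*$ with $|\varsigma'|=|z|$ and all $\varsigma\in\mathcal S^*$ with $|\varsigma|=|u|$, both having letters in the support of $\nu_\phi$, we have $Q_\phi(z,\varsigma')=\emptyset$ and $Q_\phi(uz,\varsigma\varsigma')=\emptyset$.
   Context: $G=(\mathcal V,\mathcal E)$ is a finite connected simple graph, $i - j$ denotes adjacency. A list of preferences $\sigma\in\mathcal S$ gives for each class $i$ a linear ordering of its neighbours; the policy $\phi$ comes with a probability $\nu_\phi$ on $\mathcal S$. $\mathbb W=\{w\in\mathcal V^*:|w|_i|w|_j=0 \text{ whenever } i - j\}$ and $\mathbb W_2$ is the set of words of $\mathbb W$ of even length. $\phi$ is admissible if there is a map $\odot_\phi:\mathbb W\times(\mathcal V\times\mathcal S)\to\mathbb W$ with $w\odot_\phi(v,\sigma)=wv$ if no letter of $w$ is adjacent to $v$, and otherwise $w$ with one letter adjacent to $v$ (chosen by $\phi$ as a function of $w,v,\sigma$) deleted. For $z=z_1\cdots z_k$, $\varsigma=\varsigma_1\cdots\varsigma_k$, $Q_\phi(z,\varsigma)=(\cdots(\emptyset\odot_\phi(z_1,\varsigma_1))\cdots)\odot_\phi(z_k,\varsigma_k)$. $\phi$ is sub-additive if $|Q_\phi(z'z'',\varsigma'\varsigma'')|\le|Q_\phi(z',\varsigma')|+|Q_\phi(z'',\varsigma'')|$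 for all words $z',z''$ and preference words $\varsigma',\varsigma''$ of matching lengths with letters in the support of $\nu_\phi$. *)

theory Defs
  imports Main "HOL-Probability.Probability_Mass_Function"
begin

definition simple_graph :: "'v set \<Rightarrow> ('v \<Rightarrow> 'v \<Rightarrow> bool) \<Rightarrow> bool" where
  "simple_graph V E \<longleftrightarrow> finite V \<and> V \<noteq> {} \<and>
     (\<forall>x y. E x y \<longrightarrow> x \<in> V \<and> y \<in> V) \<and>
     (\<forall>x y. E x y \<longrightarrow> E y x) \<and> (\<forall>x. \<not> E x x)"

definition connected_graph :: "'v set \<Rightarrow> ('v \<Rightarrow> 'v \<Rightarrow> bool) \<Rightarrow> bool" where
  "connected_graph V E \<longleftrightarrow> (\<forall>x\<in>V. \<forall>y\<in>V. E\<^sup>*\<^sup>* x y)"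

definition bipartite :: "'v set \<Rightarrow> ('v \<Rightarrow> 'v \<Rightarrow> bool) \<Rightarrow> bool" where
  "bipartite V E \<longleftrightarrow> (\<exists>A \<subseteq> V. \<forall>x y. E x y \<longrightarrow> (x \<in> A \<longleftrightarrow> y \<notin> A))"

definition pref_list :: "'v set \<Rightarrow> ('v \<Rightarrow> 'v \<Rightarrow> bool) \<Rightarrow> ('v \<Rightarrow> 'v list) \<Rightarrow> bool" where
  "pref_list V E \<sigma> \<longleftrightarrow> (\<forall>i\<in>V. distinct (\<sigma> i) \<and> set (\<sigma> i) = {j. E i j}) \<and>
     (\<forall>i. i \<notin> V \<longrightarrow> \<sigma> i = [])"

definition inW :: "'v set \<Rightarrow> ('v \<Rightarrow> 'v \<Rightarrow> bool) \<Rightarrow> 'v list \<Rightarrow> bool" where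
  "inW V E w \<longleftrightarrow> set w \<subseteq> V \<and>
     (\<forall>i j. E i j \<longrightarrow> count_list w i * count_list w j = 0)"

text \<open>A matching policy is given by its update map odot (w, v, sigma) and the
  probability nu on preference lists. Admissibility of the map:\<close>

definition admissible ::
  "'v set \<Rightarrow> ('v \<Rightarrow> 'v \<Rightarrow> bool) \<Rightarrow> ('v list \<Rightarrow> 'v \<Rightarrow> ('v \<Rightarrow> 'v list) \<Rightarrow> 'v list) \<Rightarrow> bool" where
  "admissible V E odot \<longleftrightarrow>
     (\<forall>w v \<sigma>. inW V E w \<and> v \<in> V \<and> pref_list V E \<sigma> \<longrightarrow>
        (if \<not> (\<exists>x\<in>set w. E x v) then odot w v \<sigma> = w @ [v]
         else (\<exists>k < length w. E (w ! k) v \<and> odot w v \<sigma> = take k w @ drop (Suc k) w)))"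

definition Qphi ::
  "('v list \<Rightarrow> 'v \<Rightarrow> ('v \<Rightarrow> 'v list) \<Rightarrow> 'v list) \<Rightarrow> 'v list \<Rightarrow> ('v \<Rightarrow> 'v list) list \<Rightarrow> 'v list" where
  "Qphi odot z \<sigma>s = foldl (\<lambda>w (v, \<sigma>). odot w v \<sigma>) [] (zip z \<sigma>s)"

definition sub_additive ::
  "'v set \<Rightarrow> ('v list \<Rightarrow> 'v \<Rightarrow> ('v \<Rightarrow> 'v list) \<Rightarrow> 'v list) \<Rightarrow> ('v \<Rightarrow> 'v list) pmf \<Rightarrow> bool" where
  "sub_additive V odot \<nu> \<longleftrightarrow>
     (\<forall>z1 z2 s1 s2. set z1 \<subseteq> V \<and> set z2 \<subseteq> V \<and>
        length s1 = length z1 \<and> length s2 = length z2 \<and>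
        set s1 \<subseteq> set_pmf \<nu> \<and> set s2 \<subseteq> set_pmf \<nu> \<longrightarrow>
        length (Qphi odot (z1 @ z2) (s1 @ s2))
          \<le> length (Qphi odot z1 s1) + length (Qphi odot z2 s2))"

definition erasing_word ::
  "'v set \<Rightarrow> ('v list \<Rightarrow> 'v \<Rightarrow> ('v \<Rightarrow> 'v list) \<Rightarrow> 'v list) \<Rightarrow> ('v \<Rightarrow> 'v list) pmf
   \<Rightarrow> 'v list \<Rightarrow> 'v list \<Rightarrow> bool" where
  "erasing_word V odot \<nu> u z \<longleftrightarrow> set z \<subseteq> V \<and> even (length z) \<and>
     (\<forall>s' s. length s' = length z \<and> set s' \<subseteq> set_pmf \<nu> \<and>
             length s = length u \<and> set s \<subseteq> set_pmf \<nu> \<longrightarrow>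
        Qphi odot z s' = [] \<and> Qphi odot (u @ z) (s @ s') = [])"

end

theory Submission
  imports Defs
begin

locale setting =
  fixes V :: "'v set" and E :: "'v \<Rightarrow> 'v \<Rightarrow> bool"
    and odot :: "'v list \<Rightarrow> 'v \<Rightarrow> ('v \<Rightarrow> 'v list) \<Rightarrow> 'v list"
    and \<nu> :: "('v \<Rightarrow> 'v list) pmf"
  assumes sg: "simple_graph V E" and cg: "connected_graph V E" and nb: "\<not> bipartite V E"
    and pref: "set_pmf \<nu> \<subseteq> {\<sigma>. pref_list V E \<sigma>}"
    and adm: "admissible V E odot" and sa: "sub_additive V odot \<nu>"
begin

lemma EV: "E x y \<Longrightarrow> x \<in> V \<and> y \<in> V" using sg unfolding simple_graph_def by blast
lemma Esym: "E x y \<Longrightarrow> E y x" using sg unfolding simple_graph_def by blast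
lemma Eirr: "\<not> E x x" using sg unfolding simple_graph_def by blast
lemma Vfin: "finite V" using sg unfolding simple_graph_def by blast
lemma Vne: "V \<noteq> {}" using sg unfolding simple_graph_def by blast

definition inWm :: "'v multiset \<Rightarrow> bool" where
  "inWm X \<longleftrightarrow> set_mset X \<subseteq> V \<and> (\<forall>i j. E i j \<longrightarrow> count X i * count X j = 0)"

lemma inW_iff: "inW V E w \<longleftrightarrow> inWm (mset w)"
  unfolding inW_def inWm_def by (simp add: count_mset)

lemma inWm_add: "inWm X \<Longrightarrow> v \<in> V \<Longrightarrow> \<forall>x\<in>#X. \<not> E x v \<Longrightarrow> inWm (X + {#v#})"
  unfolding inWm_def
proof (intro conjI allI impI)
  assume a: "set_mset X \<subseteq> V \<and> (\<forall>i j. E i j \<longrightarrow> count X i * count X j = 0)"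
    and v: "v \<in> V" and n: "\<forall>x\<in>#X. \<not> E x v"
  show "set_mset (X + {#v#}) \<subseteq> V" using a v by simp
  fix i j assume e: "E i j"
  have c0: "count X i * count X j = 0" using a e by blast
  show "count (X + {#v#}) i * count (X + {#v#}) j = 0"
  proof (cases "i = v")
    case True
    then have "j \<noteq> v" using e Eirr by blast
    moreover have "count X j = 0" using n e True Esym by (meson not_in_iff)
    ultimately show ?thesis by simp
  next
    case False
    show ?thesis
    proof (cases "j = v")
      case True
      have "count X i = 0" using n e True by (meson not_in_iff)
      then show ?thesis using False by simp
    next
      case False2: False
      then show ?thesis using False c0 by simp
    qed
  qed
qed

lemma inWm_diff: "inWm X \<Longrightarrow> inWm (X - {#a#})"
  unfolding inWm_def
proof (intro conjI allI impI)
  assume a: "set_mset X \<subseteq> V \<and> (\<forall>i j. E i j \<longrightarrow> count X i * count X j = 0)"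
  show "set_mset (X - {#a#}) \<subseteq> V" using a by (meson in_diffD subset_iff)
  fix i j assume e: "E i j"
  have "count X i = 0 \<or> count X j = 0" using a e by simp
  moreover have "count (X - {#a#}) i \<le> count X i" "count (X - {#a#}) j \<le> count X j" by auto
  ultimately show "count (X - {#a#}) i * count (X - {#a#}) j = 0" by auto
qed

lemma mset_del: "k < length w \<Longrightarrow> mset (take k w @ drop (Suc k) w) = mset w - {#w!k#}"
proof -
  assume k: "k < length w"
  have e: "mset (take k w @ w!k # drop (Suc k) w) = add_mset (w!k) (mset (take k w @ drop (Suc k) w))"
    by simp
  have "take k w @ w!k # drop (Suc k) w = w" using id_take_nth_drop[OF k] by simp
  then have "mset w = add_mset (w!k) (mset (take k w @ drop (Suc k) w))" using e by simp
  then show ?thesis by simp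
qed

lemma step:
  assumes w: "inW V E w" and v: "v \<in> V" and s: "\<sigma> \<in> set_pmf \<nu>"
  shows "inW V E (odot w v \<sigma>) \<and>
    ((\<not>(\<exists>x\<in>#mset w. E x v) \<and> mset (odot w v \<sigma>) = mset w + {#v#}) \<or>
     (\<exists>a\<in>#mset w. E a v \<and> mset (odot w v \<sigma>) = mset w - {#a#}))"
proof -
  have p: "pref_list V E \<sigma>" using s pref by auto
  have A: "if \<not> (\<exists>x\<in>set w. E x v) then odot w v \<sigma> = w @ [v]
         else (\<exists>k < length w. E (w ! k) v \<and> odot w v \<sigma> = take k w @ drop (Suc k) w)"
    using adm w v p unfolding admissible_def by blast
  show ?thesis
  proof (cases "\<exists>x\<in>set w. E x v")
    case False
    then have "odot w v \<sigma> = w @ [v]" using A by simp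
    moreover have "inWm (mset w + {#v#})" using inWm_add[of "mset w" v] w v False
      by (simp add: inW_iff)
    ultimately show ?thesis using False by (simp add: inW_iff)
  next
    case True
    then obtain k where k: "k < length w" "E (w!k) v" "odot w v \<sigma> = take k w @ drop (Suc k) w"
      using A by auto
    then have "mset (odot w v \<sigma>) = mset w - {#w!k#}" using mset_del by simp
    moreover have "w!k \<in># mset w" using k by simp
    ultimately show ?thesis using k inWm_diff[of "mset w" "w!k"] w by (auto simp: inW_iff)
  qed
qed

definition R :: "'v list \<Rightarrow> 'v list \<Rightarrow> ('v \<Rightarrow> 'v list) list \<Rightarrow> 'v list" where
  "R w z ss = foldl (\<lambda>w (v, \<sigma>). odot w v \<sigma>) w (zip z ss)"

lemma Q_R: "Qphi odot z ss = R [] z ss" unfolding Qphi_def R_def by simp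

lemma R_Nil: "R w [] ss = w" unfolding R_def by simp
lemma R_Cons: "R w (v # z) (\<sigma> # ss) = R (odot w v \<sigma>) z ss" unfolding R_def by simp
lemma R_app: "length ss1 = length z1 \<Longrightarrow> R w (z1 @ z2) (ss1 @ ss2) = R (R w z1 ss1) z2 ss2"
  unfolding R_def by simp

definition valid :: "('v \<Rightarrow> 'v list) list \<Rightarrow> bool" where
  "valid ss \<longleftrightarrow> set ss \<subseteq> set_pmf \<nu>"

definition tr :: "'v multiset \<Rightarrow> 'v list \<Rightarrow> 'v multiset \<Rightarrow> bool" where
  "tr X z Y \<longleftrightarrow> (\<forall>w ss. inW V E w \<and> mset w = X \<and> length ss = length z \<and> valid ss \<longrightarrow>
      inW V E (R w z ss) \<and> mset (R w z ss) = Y)"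

lemma tr_Nil: "tr X [] X"
  unfolding tr_def by (simp add: R_Nil)

lemma tr_app: "tr X z1 Y \<Longrightarrow> tr Y z2 Z \<Longrightarrow> tr X (z1 @ z2) Z"
  unfolding tr_def
proof (intro allI impI)
  fix w ss
  assume t1: "\<forall>w ss. inW V E w \<and> mset w = X \<and> length ss = length z1 \<and> valid ss \<longrightarrow>
      inW V E (R w z1 ss) \<and> mset (R w z1 ss) = Y"
    and t2: "\<forall>w ss. inW V E w \<and> mset w = Y \<and> length ss = length z2 \<and> valid ss \<longrightarrow>
      inW V E (R w z2 ss) \<and> mset (R w z2 ss) = Z"
    and h: "inW V E w \<and> mset w = X \<and> length ss = length (z1 @ z2) \<and> valid ss"
  let ?s1 = "take (length z1) ss" and ?s2 = "drop (length z1) ss"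
  have e: "ss = ?s1 @ ?s2" by simp
  have v1: "valid ?s1" "valid ?s2" using h unfolding valid_def
    by (meson order_trans set_take_subset set_drop_subset)+
  have l1: "length ?s1 = length z1" using h by simp
  have "R w (z1 @ z2) ss = R w (z1 @ z2) (?s1 @ ?s2)" by simp
  also have "\<dots> = R (R w z1 ?s1) z2 ?s2" using R_app[OF l1] .
  finally have "R w (z1 @ z2) ss = R (R w z1 ?s1) z2 ?s2" .
  moreover have "inW V E (R w z1 ?s1) \<and> mset (R w z1 ?s1) = Y" using t1 h v1 by simp
  ultimately show "inW V E (R w (z1 @ z2) ss) \<and> mset (R w (z1 @ z2) ss) = Z"
    using t2 h v1 by simp
qed


lemma filter_rep: "filter_mset P (replicate_mset n a) = (if P a then replicate_mset n a else {#})"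
  by (induction n) auto

lemma valid_Cons: "valid (\<sigma> # ss) \<longleftrightarrow> \<sigma> \<in> set_pmf \<nu> \<and> valid ss"
  unfolding valid_def by simp

lemma pow_full:
  assumes "v \<in> V"
  shows "size (filter_mset (\<lambda>x. E x v) X) \<le> k \<Longrightarrow>
    tr X (replicate k v) (filter_mset (\<lambda>x. \<not> E x v) X +
        replicate_mset (k - size (filter_mset (\<lambda>x. E x v) X)) v)"
proof (induction k arbitrary: X)
  case 0
  then have "filter_mset (\<lambda>x. E x v) X = {#}" by simp
  then have "filter_mset (\<lambda>x. \<not> E x v) X = X" by (metis add_0 multiset_partition)
  then show ?case using tr_Nil by simp
next
  case (Suc k)
  show ?case unfolding tr_def
  proof (intro allI impI)
    fix w ss
    assume h: "inW V E w \<and> mset w = X \<and> length ss = length (replicate (Suc k) v) \<and> valid ss"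
    then obtain \<sigma> ss' where ss: "ss = \<sigma> # ss'" by (cases ss) auto
    have vs: "\<sigma> \<in> set_pmf \<nu>" "valid ss'" "length ss' = k" using h ss valid_Cons by auto
    have R1: "R w (replicate (Suc k) v) ss = R (odot w v \<sigma>) (replicate k v) ss'"
      using ss by (simp add: R_Cons)
    note st = step[OF conjunct1[OF h] assms vs(1)]
    let ?w1 = "odot w v \<sigma>"
    have w1i: "inW V E ?w1" using st by blast
    have mw: "mset w = X" using h by blast
    show "inW V E (R w (replicate (Suc k) v) ss) \<and>
          mset (R w (replicate (Suc k) v) ss) =
          filter_mset (\<lambda>x. \<not> E x v) X + replicate_mset (Suc k - size (filter_mset (\<lambda>x. E x v) X)) v"
    proof (cases "\<exists>x\<in>#mset w. E x v")
      case False
      then have m1: "mset ?w1 = X + {#v#}" using st mw by blast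
      have f0: "filter_mset (\<lambda>x. E x v) X = {#}" using False mw
        by (simp add: filter_mset_eq_conv)
      have f1: "filter_mset (\<lambda>x. E x v) (X + {#v#}) = {#}" using f0 Eirr by simp
      have fb0: "filter_mset (\<lambda>x. \<not> E x v) (X + {#v#}) = filter_mset (\<lambda>x. \<not> E x v) X + {#v#}"
        using Eirr by simp
      have z1: "size (filter_mset (\<lambda>x. E x v) (X + {#v#})) = 0" using f1 by simp
      have z0: "size (filter_mset (\<lambda>x. E x v) X) = 0" using f0 by simp
      have IH: "tr (X + {#v#}) (replicate k v) (filter_mset (\<lambda>x. \<not> E x v) (X + {#v#}) +
        replicate_mset (k - size (filter_mset (\<lambda>x. E x v) (X + {#v#}))) v)"
        using Suc.IH[of "X + {#v#}"] z1 by simp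
      have pre: "inW V E ?w1 \<and> mset ?w1 = X + {#v#} \<and> length ss' = length (replicate k v) \<and> valid ss'"
        using w1i m1 vs by simp
      note hh = IH[unfolded tr_def, rule_format, OF pre]
      show ?thesis unfolding R1 z0 using hh unfolding z1 fb0 by simp
    next
      case True
      then have "\<exists>a\<in>#mset w. E a v \<and> mset ?w1 = mset w - {#a#}" using st by blast
      then obtain a where a: "a \<in># X" "E a v" "mset ?w1 = X - {#a#}" using mw by blast
      have fa: "filter_mset (\<lambda>x. E x v) (X - {#a#}) = filter_mset (\<lambda>x. E x v) X - {#a#}"
        using a by (simp add: filter_diff_mset)
      have fb: "filter_mset (\<lambda>x. \<not> E x v) (X - {#a#}) = filter_mset (\<lambda>x. \<not> E x v) X"
        using a by (simp add: filter_diff_mset)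
      have ain: "a \<in># filter_mset (\<lambda>x. E x v) X" using a by simp
      have sz: "size (filter_mset (\<lambda>x. E x v) (X - {#a#})) = size (filter_mset (\<lambda>x. E x v) X) - 1"
        using fa ain by (simp add: size_Diff_submset)
      have fne: "filter_mset (\<lambda>x. E x v) X \<noteq> {#}" using ain by (metis empty_iff set_mset_empty)
      then have pos: "size (filter_mset (\<lambda>x. E x v) X) \<ge> 1"
        by (metis One_nat_def Suc_leI size_eq_0_iff_empty neq0_conv)
      have IH: "tr (X - {#a#}) (replicate k v) (filter_mset (\<lambda>x. \<not> E x v) (X - {#a#}) +
        replicate_mset (k - size (filter_mset (\<lambda>x. E x v) (X - {#a#}))) v)"
        using Suc.IH[of "X - {#a#}"] sz Suc.prems by simp
      have pre: "inW V E ?w1 \<and> mset ?w1 = X - {#a#} \<and> length ss' = length (replicate k v) \<and> valid ss'"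
        using w1i a vs by simp
      note hh = IH[unfolded tr_def, rule_format, OF pre]
      have kk: "k - size (filter_mset (\<lambda>x. E x v) (X - {#a#})) =
           Suc k - size (filter_mset (\<lambda>x. E x v) X)" using sz pos by simp
      show ?thesis unfolding R1 using hh unfolding kk fb by simp
    qed
  qed
qed

lemma pow_single:
  assumes "v \<in> V" "E a v"
  shows "k \<le> count X a \<Longrightarrow> \<forall>x\<in>#X. E x v \<longrightarrow> x = a \<Longrightarrow> tr X (replicate k v) (X - replicate_mset k a)"
proof (induction k arbitrary: X)
  case 0
  then show ?case using tr_Nil by simp
next
  case (Suc k)
  show ?case unfolding tr_def
  proof (intro allI impI)
    fix w ss
    assume h: "inW V E w \<and> mset w = X \<and> length ss = length (replicate (Suc k) v) \<and> valid ss"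
    then obtain \<sigma> ss' where ss: "ss = \<sigma> # ss'" by (cases ss) auto
    have vs: "\<sigma> \<in> set_pmf \<nu>" "valid ss'" "length ss' = k" using h ss valid_Cons by auto
    have R1: "R w (replicate (Suc k) v) ss = R (odot w v \<sigma>) (replicate k v) ss'"
      using ss by (simp add: R_Cons)
    note st = step[OF conjunct1[OF h] assms(1) vs(1)]
    let ?w1 = "odot w v \<sigma>"
    have w1i: "inW V E ?w1" using st by blast
    have mw: "mset w = X" using h by blast
    have "0 < count X a" using Suc.prems(1) by linarith
    then have ain: "a \<in># X" by (meson count_greater_zero_iff)
    then have "\<exists>x\<in>#mset w. E x v" using mw assms(2) by blast
    then have "\<exists>b\<in>#mset w. E b v \<and> mset ?w1 = mset w - {#b#}" using st by blast
    then obtain b where b: "b \<in># X" "E b v" "mset ?w1 = X - {#b#}" using mw by blast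
    have ba: "b = a" using b Suc.prems(2) by blast
    have p1: "k \<le> count (X - {#a#}) a" using Suc.prems(1) by simp
    have p2: "\<forall>x\<in>#X - {#a#}. E x v \<longrightarrow> x = a" using Suc.prems(2) by (auto dest: in_diffD)
    note IH = Suc.IH[OF p1 p2]
    have pre: "inW V E ?w1 \<and> mset ?w1 = X - {#a#} \<and> length ss' = length (replicate k v) \<and> valid ss'"
      using w1i b ba vs by simp
    note hh = IH[unfolded tr_def, rule_format, OF pre]
    show "inW V E (R w (replicate (Suc k) v) ss) \<and>
          mset (R w (replicate (Suc k) v) ss) = X - replicate_mset (Suc k) a"
      unfolding R1 using hh by simp
  qed
qed

lemma inW_prefix: assumes "inW V E (w @ u)" shows "inW V E w"
  unfolding inW_def
proof (intro conjI allI impI)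
  show "set w \<subseteq> V" using assms unfolding inW_def by simp
  fix i j assume e: "E i j"
  have "count_list (w@u) i * count_list (w@u) j = 0" using assms e unfolding inW_def by blast
  then show "count_list w i * count_list w j = 0" by auto
qed

lemma R_W: "inW V E (w @ u) \<Longrightarrow> length ss = length u \<Longrightarrow> valid ss \<Longrightarrow> R w u ss = w @ u"
proof (induction u arbitrary: w ss)
  case Nil
  then show ?case by (simp add: R_Nil)
next
  case (Cons v u)
  then obtain \<sigma> ss' where ss: "ss = \<sigma> # ss'" by (cases ss) auto
  have vs: "\<sigma> \<in> set_pmf \<nu>" "valid ss'" "length ss' = length u" using Cons.prems ss valid_Cons by auto
  have p: "pref_list V E \<sigma>" using vs pref by auto
  have wW: "inW V E w" using Cons.prems inW_prefix by blast
  have vV: "v \<in> V" using Cons.prems unfolding inW_def by auto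
  have nn: "\<not> (\<exists>x\<in>set w. E x v)"
  proof
    assume "\<exists>x\<in>set w. E x v"
    then obtain x where x: "x \<in> set w" "E x v" by blast
    have "count_list (w @ v # u) x * count_list (w @ v # u) v = 0"
      using Cons.prems x unfolding inW_def by blast
    moreover have "count_list (w @ v # u) x > 0" using x
      by (metis count_mset count_mset_gt_0 in_set_conv_decomp append_assoc set_append Un_iff)
    moreover have "count_list (w @ v # u) v > 0"
      by (metis count_mset count_mset_gt_0 in_set_conv_decomp)
    ultimately show False by simp
  qed
  have A: "if \<not> (\<exists>x\<in>set w. E x v) then odot w v \<sigma> = w @ [v]
         else (\<exists>k < length w. E (w ! k) v \<and> odot w v \<sigma> = take k w @ drop (Suc k) w)"
    using adm wW vV p unfolding admissible_def by blast
  then have o: "odot w v \<sigma> = w @ [v]" using nn by simp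
  have "R (w @ [v]) u ss' = (w @ [v]) @ u" using Cons.IH[of "w @ [v]" ss'] Cons.prems vs by simp
  then show ?case using ss o by (simp add: R_Cons)
qed

inductive G :: "'v list \<Rightarrow> bool" where
  G_Nil: "G []"
| G_blk: "E p q \<Longrightarrow> G z \<Longrightarrow> G (replicate k p @ replicate k q @ z)"

lemma G_app: "G z1 \<Longrightarrow> G z2 \<Longrightarrow> G (z1 @ z2)"
proof (induction rule: G.induct)
  case G_Nil then show ?case by simp
next
  case (G_blk p q z k)
  then show ?case using G.G_blk[of p q "z @ z2" k] by simp
qed

lemma G_one: "E p q \<Longrightarrow> G (replicate k p @ replicate k q)"
  using G_blk[OF _ G_Nil] by fastforce

lemma tr_empty: "tr {#} z {#} \<Longrightarrow> length ss = length z \<Longrightarrow> valid ss \<Longrightarrow> R [] z ss = []"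
proof -
  assume a: "tr {#} z {#}" "length ss = length z" "valid ss"
  have "inW V E []" unfolding inW_def by simp
  then have "mset (R [] z ss) = {#}" using a unfolding tr_def by auto
  then show ?thesis by simp
qed

lemma blk_van: "E p q \<Longrightarrow> tr {#} (replicate k p @ replicate k q) {#}"
proof -
  assume e: "E p q"
  have pv: "p \<in> V" "q \<in> V" using EV e by auto
  have 1: "tr {#} (replicate k p) (replicate_mset k p)"
    using pow_full[OF pv(1), of "{#}" k] by simp
  have 2: "tr (replicate_mset k p) (replicate k q) {#}"
    using pow_full[OF pv(2), of "replicate_mset k p" k] e by (simp add: filter_rep)
  show ?thesis using tr_app[OF 1 2] .
qed

lemma G_props: "G z \<Longrightarrow> set z \<subseteq> V \<and> even (length z) \<and>
   (\<forall>ss. length ss = length z \<and> valid ss \<longrightarrow> Qphi odot z ss = [])"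
proof (induction rule: G.induct)
  case G_Nil
  then show ?case by (simp add: Q_R R_Nil)
next
  case (G_blk p q z k)
  let ?b = "replicate k p @ replicate k q"
  have pv: "p \<in> V" "q \<in> V" using EV G_blk by auto
  have sb: "set ?b \<subseteq> V" using pv by auto
  show ?case
  proof (intro conjI allI impI)
    show "set (replicate k p @ replicate k q @ z) \<subseteq> V" using sb G_blk by simp
    show "even (length (replicate k p @ replicate k q @ z))" using G_blk by simp
    fix ss assume h: "length ss = length (replicate k p @ replicate k q @ z) \<and> valid ss"
    let ?s1 = "take (length ?b) ss" and ?s2 = "drop (length ?b) ss"
    have v1: "valid ?s1" "valid ?s2" using h unfolding valid_def
      by (meson order_trans set_take_subset set_drop_subset)+
    have l1: "length ?s1 = length ?b" using h by simp
    have l2: "length ?s2 = length z" using h by simp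
    have q1: "Qphi odot ?b ?s1 = []" using tr_empty[OF blk_van[OF G_blk(1)] l1 v1(1)] by (simp add: Q_R)
    have q2: "Qphi odot z ?s2 = []" using G_blk l2 v1 by simp
    have "length (Qphi odot (?b @ z) (?s1 @ ?s2)) \<le> length (Qphi odot ?b ?s1) + length (Qphi odot z ?s2)"
      using sa sb G_blk l1 l2 v1 unfolding sub_additive_def valid_def by blast
    then show "Qphi odot (replicate k p @ replicate k q @ z) ss = []" using q1 q2 by simp
  qed
qed

definition Reach :: "'v multiset \<Rightarrow> 'v multiset \<Rightarrow> bool" where
  "Reach X Y \<longleftrightarrow> (\<exists>z. G z \<and> tr X z Y)"

lemma Reach_refl: "Reach X X" unfolding Reach_def using G_Nil tr_Nil by blast
lemma Reach_trans: "Reach X Y \<Longrightarrow> Reach Y Z \<Longrightarrow> Reach X Z"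
  unfolding Reach_def using G_app tr_app by blast



lemma walk_comp: "(E ^^ a) x y \<Longrightarrow> (E ^^ b) y z \<Longrightarrow> (E ^^ (a + b)) x z"
  by (auto simp: relpowp_add)

lemma walk_sym: "(E ^^ n) x y \<Longrightarrow> (E ^^ n) y x"
proof (induction n arbitrary: x y)
  case 0 then show ?case by simp
next
  case (Suc n)
  then obtain w where "E x w" "(E ^^ n) w y" using relpowp_Suc_D2 by metis
  then show ?case using Suc.IH relpowp_Suc_I Esym by metis
qed

lemma odd_cw: "\<exists>L c. odd L \<and> (E ^^ L) c c"
proof -
  obtain r where r: "r \<in> V" using Vne by blast
  define A where "A = {y \<in> V. \<exists>n. even n \<and> (E ^^ n) r y}"
  have "A \<subseteq> V" unfolding A_def by auto
  then obtain x y where xy: "E x y" "x \<in> A \<longleftrightarrow> y \<in> A" using nb unfolding bipartite_def by blast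
  have V: "x \<in> V" "y \<in> V" using EV xy by auto
  obtain nx where nx: "(E ^^ nx) r x" using cg r V unfolding connected_graph_def rtranclp_power by blast
  obtain ny where ny: "(E ^^ ny) r y" using cg r V unfolding connected_graph_def rtranclp_power by blast
  have w1: "(E ^^ (Suc nx + ny)) r r"
    using walk_comp[OF relpowp_Suc_I[OF nx xy(1)] walk_sym[OF ny]] .
  show ?thesis
  proof (cases "x \<in> A")
    case True
    then have "y \<in> A" using xy by simp
    then obtain mx my where h: "even mx" "(E ^^ mx) r x" "even my" "(E ^^ my) r y"
      using True unfolding A_def by blast
    have "(E ^^ (Suc mx + my)) r r" using walk_comp[OF relpowp_Suc_I[OF h(2) xy(1)] walk_sym[OF h(4)]] .
    moreover have "odd (Suc mx + my)" using h by simp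
    ultimately show ?thesis by blast
  next
    case False
    then have "y \<notin> A" using xy by simp
    then have "odd nx" "odd ny" using False nx ny V unfolding A_def by auto
    then show ?thesis using w1 by (intro exI[of _ "Suc nx + ny"] exI[of _ r]) auto
  qed
qed

definition L0 :: nat where "L0 = (LEAST L. odd L \<and> (\<exists>c. (E ^^ L) c c))"
definition c0 :: 'v where "c0 = (SOME c. (E ^^ L0) c c)"
definition wk :: "nat \<Rightarrow> 'v" where
  "wk = (SOME f. f 0 = c0 \<and> f L0 = c0 \<and> (\<forall>i<L0. E (f i) (f (Suc i))))"

lemma L0_props: "odd L0" "(E ^^ L0) c0 c0"
proof -
  have ex: "\<exists>L. odd L \<and> (\<exists>c. (E ^^ L) c c)" using odd_cw by blast
  have "odd L0 \<and> (\<exists>c. (E ^^ L0) c c)" unfolding L0_def by (rule LeastI_ex[OF ex])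
  then show "odd L0" "(E ^^ L0) c0 c0" unfolding c0_def by (auto intro: someI_ex)
qed

lemma L0_min: "L < L0 \<Longrightarrow> odd L \<Longrightarrow> \<not> (E ^^ L) x x"
  unfolding L0_def using not_less_Least by blast

lemma wk_props: "wk 0 = c0" "wk L0 = c0" "\<And>i. i < L0 \<Longrightarrow> E (wk i) (wk (Suc i))"
proof -
  have "\<exists>f. f 0 = c0 \<and> f L0 = c0 \<and> (\<forall>i<L0. E (f i) (f (Suc i)))"
    using L0_props(2) relpowp_fun_conv by metis
  then have "wk 0 = c0 \<and> wk L0 = c0 \<and> (\<forall>i<L0. E (wk i) (wk (Suc i)))"
    unfolding wk_def by (rule someI_ex)
  then show "wk 0 = c0" "wk L0 = c0" "\<And>i. i < L0 \<Longrightarrow> E (wk i) (wk (Suc i))" by auto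
qed

lemma sub_walk: "m + n \<le> L0 \<Longrightarrow> (E ^^ n) (wk m) (wk (m + n))"
proof (induction n)
  case 0 then show ?case by simp
next
  case (Suc n)
  then have "(E ^^ n) (wk m) (wk (m + n))" by simp
  moreover have "E (wk (m + n)) (wk (Suc (m + n)))" using Suc.prems wk_props(3) by simp
  ultimately show ?case using relpowp_Suc_I by fastforce
qed

lemma L0_ge3: "L0 \<ge> 3"
proof -
  have "L0 \<noteq> 1" using L0_props(2) Eirr by (metis relpowp_1)
  moreover have "L0 \<noteq> 0" using L0_props(1) by (metis odd_pos less_irrefl)
  moreover have "L0 \<noteq> 2" using L0_props(1) by auto
  ultimately show ?thesis by linarith
qed

lemma c0V: "c0 \<in> V" using wk_props(1) wk_props(3)[of 0] L0_ge3 EV by force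

lemma wkV: "i \<le> L0 \<Longrightarrow> wk i \<in> V"
  using wk_props(3)[of i] wk_props(2) c0V EV by (cases "i = L0") auto

lemma no_chord: assumes "2 \<le> j" "j + 2 \<le> L0" shows "\<not> E c0 (wk j)"
proof
  assume e: "E c0 (wk j)"
  have w1: "(E ^^ j) c0 (wk j)" using sub_walk[of 0 j] assms wk_props(1) by simp
  have w2: "(E ^^ (L0 - j)) (wk j) c0" using sub_walk[of j "L0 - j"] assms wk_props(2) by simp
  have c1: "(E ^^ Suc j) c0 c0" using relpowp_Suc_I[OF w1 Esym[OF e]] .
  have c2: "(E ^^ Suc (L0 - j)) c0 c0" using relpowp_Suc_I2[OF e w2] .
  show False
  proof (cases "odd (Suc j)")
    case True
    then show False using L0_min[of "Suc j" c0] c1 assms by simp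
  next
    case False
    then have "odd (Suc (L0 - j))" using L0_props(1) assms by presburger
    then show False using L0_min[of "Suc (L0 - j)" c0] c2 assms by simp
  qed
qed

lemma even_walk: "b \<in> V \<Longrightarrow> \<exists>n. even n \<and> (E ^^ n) b c0"
proof -
  assume b: "b \<in> V"
  obtain n where n: "(E ^^ n) b c0" using cg b c0V unfolding connected_graph_def rtranclp_power by blast
  show ?thesis
  proof (cases "even n")
    case True then show ?thesis using n by blast
  next
    case False
    then show ?thesis using walk_comp[OF n L0_props(2)] L0_props(1) by (intro exI[of _ "n + L0"]) auto
  qed
qed

definition W :: "nat \<Rightarrow> nat \<Rightarrow> 'v list" where
  "W t n = concat (map (\<lambda>j. replicate t (wk j)) [1..<n])"

lemma W_Suc: "1 \<le> n \<Longrightarrow> W t (Suc n) = W t n @ replicate t (wk n)"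
  unfolding W_def by (simp only: upt_Suc_append map_append concat_append) simp

lemma W_G: "2 * i + 1 \<le> L0 \<Longrightarrow> G (W t (2 * i + 1))"
proof (induction i)
  case 0 then show ?case by (simp add: W_def G_Nil)
next
  case (Suc i)
  have e: "W t (2 * Suc i + 1) = W t (2 * i + 1) @ (replicate t (wk (2*i+1)) @ replicate t (wk (2*i+2)))"
    using W_Suc[of "2*i+1" t] W_Suc[of "2*i+2" t] by (simp add: numeral_2_eq_2)
  have "E (wk (2*i+1)) (wk (2*i+2))" using wk_props(3)[of "2*i+1"] Suc.prems by simp
  then show ?case using e G_app Suc G_one by simp
qed

lemma rep2: "replicate_mset (2 * t) a - replicate_mset t a = replicate_mset t a"
  by (auto simp: multiset_eq_iff)

lemma W_tr: "2 * i + 2 + 1 \<le> L0 \<Longrightarrow> tr (replicate_mset (2 * t) c0) (W t (2 * i + 2)) (replicate_mset t c0)"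
proof (induction i)
  case 0
  have "W t (Suc (Suc 0)) = replicate t (wk 1)" unfolding W_def by simp
  moreover have "tr (replicate_mset (2 * t) c0) (replicate t (wk 1)) (replicate_mset (2 * t) c0 - replicate_mset t c0)"
    using pow_single[of "wk 1" c0 t "replicate_mset (2 * t) c0"] wkV[of 1] wk_props(1) wk_props(3)[of 0] 0 by auto
  then have "tr (replicate_mset (2 * t) c0) (replicate t (wk 1)) (replicate_mset t c0)"
    by (simp only: rep2)
  ultimately show ?case by simp
next
  case (Suc i)
  let ?d = "wk (2*i+2)" and ?v = "wk (2*i+3)"
  have e: "W t (2 * Suc i + 2) = W t (2 * i + 2) @ (replicate t ?d @ replicate t ?v)"
    using W_Suc[of "2*i+2" t] W_Suc[of "2*i+3" t] by (simp add: numeral_2_eq_2 numeral_3_eq_3)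
  have n1: "\<not> E c0 ?d" using no_chord[of "2*i+2"] Suc.prems by simp
  have n2: "\<not> E c0 ?v" using no_chord[of "2*i+3"] Suc.prems by simp
  have edv: "E ?d ?v" using wk_props(3)[of "2*i+2"] Suc.prems by (simp add: numeral_3_eq_3)
  have t1: "tr (replicate_mset t c0) (replicate t ?d) (replicate_mset t c0 + replicate_mset t ?d)"
    using pow_full[of ?d "replicate_mset t c0" t] wkV[of "2*i+2"] Suc.prems n1 by (simp add: filter_rep)
  have t2: "tr (replicate_mset t c0 + replicate_mset t ?d) (replicate t ?v) (replicate_mset t c0)"
    using pow_full[of ?v "replicate_mset t c0 + replicate_mset t ?d" t] wkV[of "2*i+3"] Suc.prems n2 edv Eirr
    by (simp add: filter_rep)
  show ?case using e Suc tr_app[OF Suc.IH tr_app[OF t1 t2]] by simp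
qed

lemma phase2: "Reach (replicate_mset (2 * t) c0) {#}"
proof -
  obtain l where l: "L0 = 2 * l + 1" using L0_props(1) oddE by blast
  then have l1: "l \<ge> 1" using L0_ge3 by simp
  define i where "i = l - 1"
  have li: "L0 = 2 * i + 2 + 1" using l l1 i_def by simp
  have WL: "W t L0 = W t (2 * i + 2) @ replicate t (wk (2 * i + 2))"
    using W_Suc[of "2*i+2" t] li by simp
  have e: "E c0 (wk (2 * i + 2))" using wk_props(3)[of "2*i+2"] wk_props(2) li Esym by simp
  have t3: "tr (replicate_mset t c0) (replicate t (wk (2 * i + 2))) {#}"
    using pow_full[of "wk (2*i+2)" "replicate_mset t c0" t] wkV[of "2*i+2"] li e by (simp add: filter_rep)
  have "tr (replicate_mset (2 * t) c0) (W t L0) {#}"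
    using WL tr_app[OF W_tr[OF _] t3] li by simp
  moreover have "G (W t L0)" using W_G[of l t] l by simp
  ultimately show ?thesis unfolding Reach_def by blast
qed



lemma tr_inWm: "tr X z Y \<Longrightarrow> inWm X \<Longrightarrow> inWm Y"
proof -
  assume t: "tr X z Y" and x: "inWm X"
  obtain w where w: "mset w = X" using ex_mset by blast
  obtain \<sigma> where s: "\<sigma> \<in> set_pmf \<nu>" using set_pmf_not_empty by fast
  let ?ss = "replicate (length z) \<sigma>"
  have v: "valid ?ss" using s unfolding valid_def by auto
  have pre: "inW V E w \<and> mset w = X \<and> length ?ss = length z \<and> valid ?ss" using w x v by (simp add: inW_iff)
  have "inW V E (R w z ?ss) \<and> mset (R w z ?ss) = Y" using t[unfolded tr_def, rule_format, OF pre] .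
  then show ?thesis by (metis inW_iff)
qed

lemma Reach_inWm: "Reach X Y \<Longrightarrow> inWm X \<Longrightarrow> inWm Y"
  unfolding Reach_def using tr_inWm by blast

lemma Bop:
  assumes e: "E p q"
    and le: "size (filter_mset (\<lambda>x. \<not> E x p \<and> E x q) X) \<le> size (filter_mset (\<lambda>x. E x p) X)"
  shows "Reach X (filter_mset (\<lambda>x. \<not> E x p \<and> \<not> E x q) X +
     replicate_mset (size (filter_mset (\<lambda>x. E x p) X) - size (filter_mset (\<lambda>x. \<not> E x p \<and> E x q) X)) q)"
proof -
  let ?m = "size (filter_mset (\<lambda>x. E x p) X)"
  let ?r = "size (filter_mset (\<lambda>x. \<not> E x p \<and> E x q) X)"
  have pv: "p \<in> V" "q \<in> V" using EV e by auto
  have t1: "tr X (replicate ?m p) (filter_mset (\<lambda>x. \<not> E x p) X)"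
    using pow_full[OF pv(1), of X ?m] by simp
  have ff: "filter_mset (\<lambda>x. E x q) (filter_mset (\<lambda>x. \<not> E x p) X) = filter_mset (\<lambda>x. \<not> E x p \<and> E x q) X"
    by (simp add: filter_filter_mset)
  have ff2: "filter_mset (\<lambda>x. \<not> E x q) (filter_mset (\<lambda>x. \<not> E x p) X) = filter_mset (\<lambda>x. \<not> E x p \<and> \<not> E x q) X"
    by (simp add: filter_filter_mset)
  have t2: "tr (filter_mset (\<lambda>x. \<not> E x p) X) (replicate ?m q)
      (filter_mset (\<lambda>x. \<not> E x p \<and> \<not> E x q) X + replicate_mset (?m - ?r) q)"
    using pow_full[OF pv(2), of "filter_mset (\<lambda>x. \<not> E x p) X" ?m] ff ff2 le by simp
  show ?thesis unfolding Reach_def using tr_app[OF t1 t2] G_one[OF e, of ?m] by blast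
qed

lemma size3: "size X = size (filter_mset (\<lambda>x. \<not> P x \<and> \<not> Q x) X) + size (filter_mset P X)
   + size (filter_mset (\<lambda>x. \<not> P x \<and> Q x) X)"
proof -
  have 1: "size X = size (filter_mset P X) + size (filter_mset (\<lambda>x. \<not> P x) X)"
    by (metis multiset_partition size_union)
  have 2: "size (filter_mset (\<lambda>x. \<not> P x) X) = size (filter_mset Q (filter_mset (\<lambda>x. \<not> P x) X))
     + size (filter_mset (\<lambda>x. \<not> Q x) (filter_mset (\<lambda>x. \<not> P x) X))"
    by (metis multiset_partition size_union)
  show ?thesis using 1 2 by (simp add: filter_filter_mset conj_commute)
qed

definition fl :: "'v \<Rightarrow> nat" where "fl b = (LEAST n. even n \<and> (E ^^ n) b c0)"

lemma fl_props: "b \<in> V \<Longrightarrow> even (fl b) \<and> (E ^^ fl b) b c0"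
proof -
  assume "b \<in> V"
  then have ex: "\<exists>n. even n \<and> (E ^^ n) b c0" using even_walk by blast
  show ?thesis unfolding fl_def by (rule LeastI_ex[OF ex])
qed

lemma fl_le: "even n \<Longrightarrow> (E ^^ n) b c0 \<Longrightarrow> fl b \<le> n"
  unfolding fl_def by (simp add: Least_le)

definition Phi :: "'v set \<Rightarrow> nat" where "Phi S = (\<Sum>c\<in>S. 2 ^ fl c)"
definition mu :: "'v multiset \<Rightarrow> nat" where "mu X = size X * (Phi V + 1) + Phi (set_mset X)"

lemma Phi_mono: "A \<subseteq> B \<Longrightarrow> finite B \<Longrightarrow> Phi A \<le> Phi B"
  unfolding Phi_def by (simp add: sum_mono2)

lemma Phi_ins: "finite A \<Longrightarrow> Phi (insert q A) \<le> Phi A + 2 ^ fl q"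
  unfolding Phi_def by (simp add: sum.insert_if)

lemma Phi_rem: "finite S \<Longrightarrow> b \<in> S \<Longrightarrow> Phi S = Phi (S - {b}) + 2 ^ fl b"
  unfolding Phi_def by (simp add: sum.remove)

lemma mu_dec:
  assumes "inWm X'" "size X' \<le> size X" "size X' < size X \<or> Phi (set_mset X') < Phi (set_mset X)"
  shows "mu X' < mu X"
proof -
  have "set_mset X' \<subseteq> V" using assms(1) unfolding inWm_def by simp
  then have ph: "Phi (set_mset X') \<le> Phi V" using Phi_mono Vfin by blast
  show ?thesis
  proof (cases "size X' < size X")
    case True
    then have "size X' + 1 \<le> size X" by simp
    then have a: "(size X' + 1) * (Phi V + 1) \<le> size X * (Phi V + 1)" by (rule mult_le_mono1)
    have b: "size X' * (Phi V + 1) + Phi (set_mset X') < (size X' + 1) * (Phi V + 1)" using ph by simp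
    show ?thesis unfolding mu_def using a b by linarith
  next
    case False
    then have "size X' = size X" using assms(2) by simp
    moreover have "Phi (set_mset X') < Phi (set_mset X)" using False assms(3) by simp
    ultimately show ?thesis unfolding mu_def by simp
  qed
qed

lemma phase1: "inWm X \<Longrightarrow> even (size X) \<Longrightarrow> \<exists>t. Reach X (replicate_mset (2 * t) c0)"
proof (induction X rule: measure_induct_rule[of mu])
  case (less X)
  show ?case
  proof (cases "set_mset X \<subseteq> {c0}")
    case True
    then have h1: "X = replicate_mset (size X) c0" by (rule set_mset_subset_singletonD)
    obtain t where ht: "size X = 2 * t" using less.prems by blast
    have "replicate_mset (size X) c0 = replicate_mset (2 * t) c0" using ht by simp
    with h1 have eqX: "X = replicate_mset (2 * t) c0" by (rule HOL.trans)
    have "Reach X (replicate_mset (2 * t) c0)" using Reach_refl[of "replicate_mset (2 * t) c0"] eqX by simp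
    then show ?thesis by blast
  next
    case False
    then obtain b where b: "b \<in># X" "b \<noteq> c0" by blast
    have SV: "set_mset X \<subseteq> V" using less.prems unfolding inWm_def by simp
    have fS: "finite (set_mset X)" by simp
    have bV: "b \<in> V" using b SV by blast
    have fb: "even (fl b)" "(E ^^ fl b) b c0" using fl_props[OF bV] by auto
    have f0: "fl b \<noteq> 0"
    proof
      assume "fl b = 0"
      then show False using fb(2) b(2) by simp
    qed
    have f1: "fl b \<noteq> 1" using fb by auto
    define n' where "n' = fl b - 2"
    have n': "fl b = Suc (Suc n')" unfolding n'_def using f0 f1 by linarith
    have "(E ^^ Suc (Suc n')) b c0" using fb(2) n' by simp
    from relpowp_Suc_D2[OF this] obtain p where p: "E b p" "(E ^^ Suc n') p c0" by blast
    from relpowp_Suc_D2[OF p(2)] obtain q where q: "E p q" "(E ^^ n') q c0" by blast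
    have evn: "even n'" using fb n' by simp
    have fq: "fl q < fl b" using fl_le[OF evn q(2)] n' by simp
    have fp: "fl p \<le> fl b" if bq: "E b q"
    proof -
      have "(E ^^ Suc (Suc n')) p c0" using relpowp_Suc_I2[OF Esym[OF p(1)] relpowp_Suc_I2[OF bq q(2)]] .
      then show ?thesis using fl_le[of "Suc (Suc n')" p] evn n' by simp
    qed
    let ?m = "size (filter_mset (\<lambda>x. E x p) X)"
    let ?r = "size (filter_mset (\<lambda>x. \<not> E x p \<and> E x q) X)"
    let ?mq = "size (filter_mset (\<lambda>x. E x q) X)"
    let ?r' = "size (filter_mset (\<lambda>x. \<not> E x q \<and> E x p) X)"
    show ?thesis
    proof (cases "?r \<le> ?m")
      case True
      define X' where "X' = filter_mset (\<lambda>x. \<not> E x p \<and> \<not> E x q) X + replicate_mset (?m - ?r) q"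
      have R1: "Reach X X'" unfolding X'_def using Bop[OF q(1) True] .
      have W': "inWm X'" using Reach_inWm[OF R1 less.prems(1)] .
      have sz: "size X = size (filter_mset (\<lambda>x. \<not> E x p \<and> \<not> E x q) X) + ?m + ?r"
        using size3[of X "\<lambda>x. E x p" "\<lambda>x. E x q"] by simp
      have sz': "size X' + 2 * ?r = size X" unfolding X'_def using sz True by simp
      have "even (size X' + 2 * ?r)" using sz' less.prems(2) by simp
      then have ev: "even (size X')" by simp
      have dec: "size X' < size X \<or> Phi (set_mset X') < Phi (set_mset X)"
      proof (cases "?r = 0")
        case False then show ?thesis using sz' by linarith
      next
        case True
        have sub: "set_mset X' \<subseteq> insert q (set_mset X - {b})"
          unfolding X'_def using p(1) by (auto dest: in_diffD)
        have "Phi (set_mset X') \<le> Phi (insert q (set_mset X - {b}))" using Phi_mono sub by simp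
        also have "\<dots> \<le> Phi (set_mset X - {b}) + 2 ^ fl q" using Phi_ins by simp
        also have "\<dots> < Phi (set_mset X - {b}) + 2 ^ fl b" using fq by simp
        also have "\<dots> = Phi (set_mset X)" using Phi_rem[OF fS] b by simp
        finally show ?thesis by simp
      qed
      have "mu X' < mu X" using mu_dec[OF W'] sz' dec by simp
      then obtain t where "Reach X' (replicate_mset (2 * t) c0)" using less.IH W' ev by blast
      then show ?thesis using Reach_trans[OF R1] by blast
    next
      case False
      have e1: "filter_mset (\<lambda>x. \<not> E x q \<and> E x p) X = filter_mset (\<lambda>x. \<not> E x q) (filter_mset (\<lambda>x. E x p) X)"
        by (simp add: filter_filter_mset conj_commute)
      have e2: "filter_mset (\<lambda>x. \<not> E x p \<and> E x q) X = filter_mset (\<lambda>x. \<not> E x p) (filter_mset (\<lambda>x. E x q) X)"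
        by (simp add: filter_filter_mset conj_commute)
      have r'm: "?r' \<le> ?m" unfolding e1 by (rule size_filter_mset_lesseq)
      have rmq: "?r \<le> ?mq" unfolding e2 by (rule size_filter_mset_lesseq)
      have le: "?r' \<le> ?mq" using False r'm rmq by simp
      define X' where "X' = filter_mset (\<lambda>x. \<not> E x q \<and> \<not> E x p) X + replicate_mset (?mq - ?r') p"
      have R1: "Reach X X'" unfolding X'_def using Bop[OF Esym[OF q(1)] le] .
      have W': "inWm X'" using Reach_inWm[OF R1 less.prems(1)] .
      have sz: "size X = size (filter_mset (\<lambda>x. \<not> E x q \<and> \<not> E x p) X) + ?mq + ?r'"
        using size3[of X "\<lambda>x. E x q" "\<lambda>x. E x p"] by simp
      have sz': "size X' + 2 * ?r' = size X" unfolding X'_def using sz le by simp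
      have "even (size X' + 2 * ?r')" using sz' less.prems(2) by simp
      then have ev: "even (size X')" by simp
      have dec: "size X' < size X \<or> Phi (set_mset X') < Phi (set_mset X)"
      proof (cases "?r' = 0")
        case False then show ?thesis using sz' by linarith
      next
        case True
        have bq: "E b q"
        proof (rule ccontr)
          assume "\<not> E b q"
          then have "b \<in># filter_mset (\<lambda>x. \<not> E x q \<and> E x p) X" using b p by simp
          then show False using True by auto
        qed
        have "?r > 0" using False by simp
        then have "filter_mset (\<lambda>x. \<not> E x p \<and> E x q) X \<noteq> {#}" by (metis less_irrefl size_empty)
        then obtain c where c: "c \<in># filter_mset (\<lambda>x. \<not> E x p \<and> E x q) X"
          by (meson multiset_nonemptyE)
        then have c': "c \<in># X" "\<not> E c p" "E c q" by auto
        have cb: "c \<noteq> b" using c' p by auto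
        have sub: "set_mset X' \<subseteq> insert p (set_mset X - {b} - {c})"
          unfolding X'_def using bq c' by (auto dest: in_diffD)
        have fS2: "finite (set_mset X - {b})" by simp
        have "Phi (set_mset X') \<le> Phi (insert p (set_mset X - {b} - {c}))" using Phi_mono sub by simp
        also have "\<dots> \<le> Phi (set_mset X - {b} - {c}) + 2 ^ fl p" using Phi_ins by simp
        also have "\<dots> \<le> Phi (set_mset X - {b} - {c}) + 2 ^ fl b" using fp[OF bq] by simp
        also have "\<dots> < Phi (set_mset X - {b} - {c}) + 2 ^ fl c + 2 ^ fl b" by simp
        also have "\<dots> = Phi (set_mset X)"
          using Phi_rem[OF fS b(1)] Phi_rem[OF fS2, of c] c' cb by simp
        finally show ?thesis by simp
      qed
      have "mu X' < mu X" using mu_dec[OF W'] sz' dec by simp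
      then obtain t where "Reach X' (replicate_mset (2 * t) c0)" using less.IH W' ev by blast
      then show ?thesis using Reach_trans[OF R1] by blast
    qed
  qed
qed

end

theorem mainTheorem8:
  fixes V :: "'v set" and E :: "'v \<Rightarrow> 'v \<Rightarrow> bool"
    and odot :: "'v list \<Rightarrow> 'v \<Rightarrow> ('v \<Rightarrow> 'v list) \<Rightarrow> 'v list"
    and \<nu> :: "('v \<Rightarrow> 'v list) pmf"
  assumes "simple_graph V E" and "connected_graph V E" and "\<not> bipartite V E"
    and "set_pmf \<nu> \<subseteq> {\<sigma>. pref_list V E \<sigma>}"
    and "admissible V E odot" and "sub_additive V odot \<nu>"
  shows "\<forall>u. inW V E u \<and> even (length u) \<longrightarrow> (\<exists>z. erasing_word V odot \<nu> u z)"
proof (intro allI impI)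
  interpret S: setting V E odot \<nu> using assms by unfold_locales
  fix u assume u: "inW V E u \<and> even (length u)"
  have "S.inWm (mset u)" using u S.inW_iff by blast
  moreover have "even (size (mset u))" using u by simp
  ultimately obtain t where "S.Reach (mset u) (replicate_mset (2 * t) S.c0)" using S.phase1 by blast
  then have "S.Reach (mset u) {#}" using S.Reach_trans S.phase2 by blast
  then obtain z where z: "S.G z" "S.tr (mset u) z {#}" unfolding S.Reach_def by blast
  have gp: "set z \<subseteq> V \<and> even (length z) \<and>
    (\<forall>ss. length ss = length z \<and> S.valid ss \<longrightarrow> Qphi odot z ss = [])" using S.G_props[OF z(1)] .
  show "\<exists>z. erasing_word V odot \<nu> u z"
  proof (intro exI[of _ z])
    show "erasing_word V odot \<nu> u z" unfolding erasing_word_def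
    proof (intro conjI allI impI)
      show "set z \<subseteq> V" "even (length z)" using gp by auto
      fix s' s :: "('v \<Rightarrow> 'v list) list"
      assume h: "length s' = length z \<and> set s' \<subseteq> set_pmf \<nu> \<and> length s = length u \<and> set s \<subseteq> set_pmf \<nu>"
      then show "Qphi odot z s' = []" using gp unfolding S.valid_def by blast
      have "S.R [] u s = u" using S.R_W[of "[]" u s] u h unfolding S.valid_def by simp
      then have e: "Qphi odot (u @ z) (s @ s') = S.R u z s'" using S.R_app h by (simp add: S.Q_R)
      have "mset (S.R u z s') = {#}" using z(2) u h unfolding S.tr_def S.valid_def by blast
      then show "Qphi odot (u @ z) (s @ s') = []" using e by simp
    qed
  qed
qed

end
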